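(* Let $n\ge 5$, let $M$ be a matching of the complete graph $K_n$, and let $G=K_n\setminus M$ be the graph obtained from $K_n$ by deleting the edges of $M$. If $M$ is a perfect matching, then $\gamma_3(G)=4$; otherwise $\gamma_3(G)=3$.
   Context: In a graph $G=(V,E)$, a vertex dominates itself and its neighbours. A set $S\subseteq V$ is a three dominating set of $G$ if every vertex in $V\setminus S$ is dominated by at least three vertices of $S$ (equivalently, every vertex of $V\setminus S$ has at least three neighbours in $S$). The three domination number $\gamma_3(G)$ is the minimum cardinality of a three dominating set of $G$. *)

theory Defs
  imports Main
begin

text \<open>Simple graphs on a finite vertex set V given by a symmetric irreflexive
adjacency relation E. Edges of K_n are 2-element subsets of V.\<close>

definition is_matching :: "'a set \<Rightarrow> 'a set set \<Rightarrow> bool" where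
  "is_matching V M \<longleftrightarrow>
     (\<forall>e\<in>M. e \<subseteq> V \<and> card e = 2) \<and>
     (\<forall>e\<in>M. \<forall>f\<in>M. e \<noteq> f \<longrightarrow> e \<inter> f = {})"

definition is_perfect_matching :: "'a set \<Rightarrow> 'a set set \<Rightarrow> bool" where
  "is_perfect_matching V M \<longleftrightarrow> is_matching V M \<and> \<Union>M = V"

definition complete_minus :: "'a set \<Rightarrow> 'a set set \<Rightarrow> 'a \<Rightarrow> 'a \<Rightarrow> bool" where
  "complete_minus V M u v \<longleftrightarrow> u \<in> V \<and> v \<in> V \<and> u \<noteq> v \<and> {u, v} \<notin> M"

definition three_dominating :: "'a set \<Rightarrow> ('a \<Rightarrow> 'a \<Rightarrow> bool) \<Rightarrow> 'a set \<Rightarrow> bool" where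
  "three_dominating V E S \<longleftrightarrow> S \<subseteq> V \<and> (\<forall>v \<in> V - S. 3 \<le> card {u \<in> S. E v u})"

definition gamma3 :: "'a set \<Rightarrow> ('a \<Rightarrow> 'a \<Rightarrow> bool) \<Rightarrow> nat" where
  "gamma3 V E = Min (card ` {S. three_dominating V E S})"

end

theory Submission
  imports Defs
begin

lemma dom_ge3:
  assumes "finite V" "card V \<ge> 5" "three_dominating V E S"
  shows "card S \<ge> 3"
proof (rule ccontr)
  assume "\<not> 3 \<le> card S"
  hence c: "card S < 3" by simp
  have td: "S \<subseteq> V \<and> (\<forall>v \<in> V - S. 3 \<le> card {u \<in> S. E v u})"
    using assms(3) unfolding three_dominating_def .
  have SV: "S \<subseteq> V" using td by (rule conjunct1)
  have all: "\<forall>v \<in> V - S. 3 \<le> card {u \<in> S. E v u}" using td by (rule conjunct2)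
  have "S \<noteq> V"
  proof
    assume "S = V" thus False using c assms(2) by simp
  qed
  then obtain v where v: "v \<in> V - S" using SV by blast
  have fS: "finite S" using SV assms(1) by (rule finite_subset)
  have "{u \<in> S. E v u} \<subseteq> S" by blast
  hence "card {u \<in> S. E v u} \<le> card S" using fS by (rule card_mono[rotated])
  moreover have "3 \<le> card {u \<in> S. E v u}" using all v by blast
  ultimately show False using c by simp
qed

lemma closed_dom:
  assumes "S \<subseteq> V" "card S \<ge> 3"
    and cl: "\<forall>u\<in>S. \<forall>g\<in>M. u \<in> g \<longrightarrow> g \<subseteq> S"
  shows "three_dominating V (complete_minus V M) S"
  unfolding three_dominating_def
proof (intro conjI ballI)
  show "S \<subseteq> V" by fact
  fix v assume v: "v \<in> V - S"
  have "{u \<in> S. complete_minus V M v u} = S"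
  proof -
    { fix u assume u: "u \<in> S"
      have "{v,u} \<notin> M" using cl u v by blast
      hence "complete_minus V M v u" using u v assms(1) unfolding complete_minus_def by auto }
    thus ?thesis by auto
  qed
  thus "3 \<le> card {u \<in> S. complete_minus V M v u}" using assms(2) by simp
qed

lemma gamma_eq:
  assumes "finite V" "three_dominating V E S" "card S = k"
    and "\<And>T. three_dominating V E T \<Longrightarrow> card T \<ge> k"
  shows "gamma3 V E = k"
  unfolding gamma3_def
proof (rule Min_eqI)
  have "{S. three_dominating V E S} \<subseteq> Pow V" unfolding three_dominating_def by auto
  hence "finite {S. three_dominating V E S}" using assms(1) finite_subset by blast
  thus "finite (card ` {S. three_dominating V E S})" by simp
  show "\<And>y. y \<in> card ` {S. three_dominating V E S} \<Longrightarrow> k \<le> y" using assms(4) by auto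
  show "k \<in> card ` {S. three_dominating V E S}" using assms(2,3) by auto
qed

lemma match_uniq:
  assumes "is_matching V M" "g \<in> M" "h \<in> M" "x \<in> g" "x \<in> h"
  shows "g = h"
proof (rule ccontr)
  assume ne: "g \<noteq> h"
  have "\<forall>e\<in>M. \<forall>f\<in>M. e \<noteq> f \<longrightarrow> e \<inter> f = {}" using assms(1) unfolding is_matching_def by (rule conjunct2)
  hence "g \<inter> h = {}" using assms(2,3) ne by blast
  thus False using assms(4,5) by blast
qed

lemma match_edge:
  assumes "is_matching V M" "g \<in> M"
  shows "\<exists>a b. g = {a,b} \<and> a \<noteq> b \<and> a \<in> V \<and> b \<in> V"
proof -
  have "\<forall>e\<in>M. e \<subseteq> V \<and> card e = 2" using assms(1) unfolding is_matching_def by (rule conjunct1)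
  hence gV: "g \<subseteq> V" and c: "card g = 2" using assms(2) by auto
  from c obtain a b where "g = {a,b}" "a \<noteq> b" unfolding card_2_iff by blast
  thus ?thesis using gV by blast
qed

lemma perfect_no3:
  assumes "finite V" "card V \<ge> 5" "is_perfect_matching V M"
    and d: "three_dominating V (complete_minus V M) S" and c3: "card S = 3"
  shows False
proof -
  have pm: "is_matching V M \<and> \<Union>M = V" using assms(3) by (simp only: is_perfect_matching_def)
  have m: "is_matching V M" using pm by (rule conjunct1)
  have cov: "\<Union>M = V" using pm by (rule conjunct2)
  have SV: "S \<subseteq> V" using d unfolding three_dominating_def by (rule conjunct1)
  have partner: "\<exists>t\<in>S. t \<noteq> s \<and> {s,t} \<in> M" if s: "s \<in> S" for s
  proof -
    have "s \<in> V" using s SV by blast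
    hence "s \<in> \<Union>M" using cov by simp
    then obtain g where g: "g \<in> M" "s \<in> g" by blast
    obtain a b where ab: "g = {a,b}" "a \<noteq> b" "a \<in> V" "b \<in> V" using match_edge[OF m g(1)] by blast
    obtain t where t: "g = {s,t}" "t \<noteq> s" "t \<in> V" using ab g(2) by auto
    have "t \<in> S"
    proof (rule ccontr)
      assume tS: "t \<notin> S"
      have "{u \<in> S. complete_minus V M t u} \<subseteq> S - {s}"
        using g(1) t(1) unfolding complete_minus_def by (auto simp: insert_commute)
      hence "card {u \<in> S. complete_minus V M t u} \<le> card (S - {s})"
        using SV assms(1) by (meson card_mono finite_Diff finite_subset)
      also have "\<dots> = 2" using c3 s by (simp add: card_Diff_singleton)
      finally have le2: "card {u \<in> S. complete_minus V M t u} \<le> 2" .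
      have "t \<in> V - S" using tS t(3) by blast
      hence "3 \<le> card {u \<in> S. complete_minus V M t u}" using d unfolding three_dominating_def by blast
      thus False using le2 by linarith
    qed
    thus ?thesis using t g by auto
  qed
  obtain x y z where xyz: "S = {x,y,z}" "x \<noteq> y" "y \<noteq> z" "x \<noteq> z" using c3 card_3_iff by metis
  obtain tx where tx: "tx \<in> S" "tx \<noteq> x" "{x,tx} \<in> M" using partner xyz by blast
  show False
  proof (cases "tx = y")
    case True
    obtain tz where tz: "tz \<in> S" "tz \<noteq> z" "{z,tz} \<in> M" using partner xyz by blast
    have "tz = x \<or> tz = y" using tz xyz by auto
    hence "{z,tz} = {x,tx}" using match_uniq[OF m tz(3) tx(3)] True by auto
    thus False using xyz True by (auto simp: doubleton_eq_iff)
  next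
    case False
    hence tz: "tx = z" using tx xyz by auto
    obtain ty where ty: "ty \<in> S" "ty \<noteq> y" "{y,ty} \<in> M" using partner xyz by blast
    have "ty = x \<or> ty = z" using ty xyz by auto
    hence "{y,ty} = {x,tx}" using match_uniq[OF m ty(3) tx(3)] tz by auto
    thus False using xyz tz by (auto simp: doubleton_eq_iff)
  qed
qed

theorem theorem2p7:
  fixes V :: "'a set" and M :: "'a set set"
  assumes "finite V" and "card V \<ge> 5" and "is_matching V M"
  shows "(is_perfect_matching V M \<longrightarrow> gamma3 V (complete_minus V M) = 4) \<and>
         (\<not> is_perfect_matching V M \<longrightarrow> gamma3 V (complete_minus V M) = 3)"
proof (intro conjI impI)
  assume p: "is_perfect_matching V M"
  have pm: "is_matching V M \<and> \<Union>M = V" using p by (simp only: is_perfect_matching_def)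
  have cov: "\<Union>M = V" using pm by (rule conjunct2)
  have "V \<noteq> {}" using assms(2) by auto
  then obtain a0 where a0: "a0 \<in> V" by blast
  have "a0 \<in> \<Union>M" using cov a0 by auto
  then obtain e where e: "e \<in> M" "a0 \<in> e" by blast
  obtain a b where ab: "e = {a,b}" "a \<noteq> b" "a \<in> V" "b \<in> V" using match_edge[OF assms(3) e(1)] by blast
  have "card (V - e) \<ge> 3" using assms(1,2) ab by (simp add: card_Diff_subset)
  then obtain c where c: "c \<in> V" "c \<notin> e" by (metis Diff_iff card.empty ex_in_conv not_numeral_le_zero)
  have "c \<in> \<Union>M" using cov c by auto
  then obtain f where f: "f \<in> M" "c \<in> f" by blast
  obtain c1 d where cd: "f = {c1,d}" "c1 \<noteq> d" "c1 \<in> V" "d \<in> V" using match_edge[OF assms(3) f(1)] by blast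
  have ef: "e \<noteq> f" using c f by auto
  hence dis: "e \<inter> f = {}" using assms(3) e f unfolding is_matching_def by blast
  have c4: "card (e \<union> f) = 4" using dis ab cd by (auto simp: card_insert_if)
  have dom: "three_dominating V (complete_minus V M) (e \<union> f)"
  proof (rule closed_dom)
    show "e \<union> f \<subseteq> V" using ab cd by auto
    show "3 \<le> card (e \<union> f)" using c4 by simp
    show "\<forall>u\<in>e \<union> f. \<forall>g\<in>M. u \<in> g \<longrightarrow> g \<subseteq> e \<union> f"
      using match_uniq[OF assms(3)] e f by blast
  qed
  show "gamma3 V (complete_minus V M) = 4"
  proof (rule gamma_eq[OF assms(1) dom c4])
    fix T assume T: "three_dominating V (complete_minus V M) T"
    have "card T \<ge> 3" by (rule dom_ge3[OF assms(1,2) T])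
    moreover have "card T \<noteq> 3" using perfect_no3[OF assms(1,2) p T] by blast
    ultimately show "card T \<ge> 4" by simp
  qed
next
  assume np: "\<not> is_perfect_matching V M"
  have "\<Union>M \<subseteq> V" using assms(3) unfolding is_matching_def by blast
  have "\<Union>M \<noteq> V"
  proof
    assume "\<Union>M = V"
    hence "is_perfect_matching V M" using assms(3) by (simp only: is_perfect_matching_def)
    thus False using np by contradiction
  qed
  then obtain w where w: "w \<in> V" "w \<notin> \<Union>M" using \<open>\<Union>M \<subseteq> V\<close> by blast
  have "\<exists>S. S \<subseteq> V \<and> card S = 3 \<and> (\<forall>u\<in>S. \<forall>g\<in>M. u \<in> g \<longrightarrow> g \<subseteq> S)"
  proof (cases "M = {}")
    case True
    obtain S where "S \<subseteq> V" "card S = 3" using obtain_subset_with_card_n[of 3 V] assms(2) by auto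
    thus ?thesis using True by blast
  next
    case False
    then obtain e where e: "e \<in> M" by blast
    obtain a b where ab: "e = {a,b}" "a \<noteq> b" "a \<in> V" "b \<in> V" using match_edge[OF assms(3) e] by blast
    have wab: "w \<noteq> a" "w \<noteq> b" using w e ab by auto
    have "card {a,b,w} = 3" using ab wab by auto
    moreover have "\<forall>u\<in>{a,b,w}. \<forall>g\<in>M. u \<in> g \<longrightarrow> g \<subseteq> {a,b,w}"
    proof (intro ballI impI)
      fix u g assume u: "u \<in> {a,b,w}" and g: "g \<in> M" "u \<in> g"
      have "u \<noteq> w" using w g by auto
      hence "u \<in> e" using u ab by auto
      hence "g = e" using match_uniq[OF assms(3) g(1) e g(2)] by blast
      thus "g \<subseteq> {a,b,w}" using ab by auto
    qed
    moreover have "{a,b,w} \<subseteq> V" using ab w by auto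
    ultimately show ?thesis by (intro exI[of _ "{a,b,w}"]) simp
  qed
  then obtain S where S: "S \<subseteq> V" "card S = 3" "\<forall>u\<in>S. \<forall>g\<in>M. u \<in> g \<longrightarrow> g \<subseteq> S" by blast
  have dom: "three_dominating V (complete_minus V M) S" using closed_dom[of S V M] S by simp
  show "gamma3 V (complete_minus V M) = 3"
    by (rule gamma_eq[OF assms(1) dom S(2)]) (rule dom_ge3[OF assms(1,2)])
qed

end
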